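(* Let $(\mathcal{F},\nu):(\mathcal{K},c)\to\mathcal{K}'$ be a bilax functor and $b:A\to A$ a $c$-bimonad in $\mathcal{K}$ with structure $(\mu,\eta,\Delta,\varepsilon)$. Equip $\mathcal{F}(b)$ with the monad structure $\mu^{\mathcal{F}}=\mathcal{F}(\mu)\cdot\mathcal{F}^2_{b,b}$, $\eta^{\mathcal{F}}=\mathcal{F}(\eta)\cdot\mathcal{F}^0_A$ and comonad structure $\Delta^{\mathcal{F}}=\mathcal{F}_{2;b,b}\cdot\mathcal{F}(\Delta)$, $\varepsilon^{\mathcal{F}}=\mathcal{F}_{0;A}\cdot\mathcal{F}(\varepsilon)$. Then $\mathcal{F}(b)$ is a $\nu$-bimonad in $\mathcal{K}'$: it satisfies $(\mu^{\mathcal{F}}\circ\mu^{\mathcal{F}})\cdot(1\circ\nu_{b,b}\circ1)\cdot(\Delta^{\mathcal{F}}\circ\Delta^{\mathcal{F}})=\Delta^{\mathcal{F}}\cdot\mu^{\mathcal{F}}$, $\varepsilon^{\mathcal{F}}\circ\varepsilon^{\mathcal{F}}=\varepsilon^{\mathcal{F}}\cdot\mu^{\mathcal{F}}$, $\eta^{\mathcal{F}}\circ\eta^{\mathcal{F}}=\Delta^{\mathcal{F}}\cdot\eta^{\mathcal{F}}$ and $\varepsilon^{\mathcal{F}}\cdot\eta^{\mathcal{F}}=1$. Moreover, $\nu_{b,b}$ is a distributive law on both the left and the right with respect to both the monad and the comonad structure of $\mathcal{F}(b)$ (so $\mathcal{F}(b)$ is a $\tau$-bimonad with $\tau=\nu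_{b,b}$).
   Context: Conventions: in a 2-category, $\circ$ is horizontal composition, $\cdot$ vertical composition ($\beta\cdot\alpha$: first $\alpha$), $1$ identity 2-cells; a 1-endocell is a 1-cell $A\to A$. A Yang–Baxter operator $c$ of $\mathcal{K}$: 2-cells $c_{g,f}:g\circ f\Rightarrow f\circ g$ for 1-endocells of a common object, natural, satisfying the Yang–Baxter equation $(c_{g,f}\circ1)\cdot(1\circ c_{h,f})\cdot(c_{h,g}\circ1)=(1\circ c_{h,g})\cdot(c_{h,f}\circ1)\cdot(1\circ c_{g,f})$ and $c_{\mathrm{id},f}=c_{f,\mathrm{id}}=1$. A $c$-bimonad is a 1-endocell $b$ with monad $(\mu,\eta)$ and comonad $(\Delta,\varepsilon)$ such that $\tau=c_{b,b}$ satisfies $\tau\cdot(\mu\circ1)=(1\circ\mu)\cdot(\tau\circ1)\cdot(1\circ\tau)$, $\tau\cdot(\eta\circ1)=1\circ\eta$, $\tau\cdot(1\circ\mu)=(\mu\circ1)\cdot(1\circ\tau)\cdot(\tau\circ1)$, $\tau\cdot(1\circ\eta)=\eta\circ1$, $(\Delta\circ1)\cdot\tau=(1\circ\tau)\cdot(\tau\circ1)\cdot(1\circ\Delta)$, $(\varepsilon\circ1)\cdot\tau=1\circ\varepsilon$, $(1\circ\Delta)\cdot\tau=(\tau\circ1)\cdot(1\circ\tau)\cdot(\Delta\circ1)$, $(1\circ\varepsilon)\cdot\tau=\varepsilon\circ1$ (these eight say $\tau$ is a left and right distributive law for the monad and for the comonad), and $(\mu\circ\mu)\cdot(1\circ\tau\circ1)\cdot(\Delta\circ\Delta)=\Delta\cdot\mu$,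 $\varepsilon\circ\varepsilon=\varepsilon\cdot\mu$, $\eta\circ\eta=\Delta\cdot\eta$, $\varepsilon\cdot\eta=1$. A bilax functor $(\mathcal{F},\nu):(\mathcal{K},c)\to\mathcal{K}'$ is a functor with lax structure $\mathcal{F}^2_{g,f}:\mathcal{F}(g)\circ\mathcal{F}(f)\Rightarrow\mathcal{F}(gf)$, $\mathcal{F}^0_A:\mathrm{id}\Rightarrow\mathcal{F}(\mathrm{id}_A)$, colax structure $\mathcal{F}_{2;g,f}:\mathcal{F}(gf)\Rightarrow\mathcal{F}(g)\circ\mathcal{F}(f)$, $\mathcal{F}_{0;A}:\mathcal{F}(\mathrm{id}_A)\Rightarrow\mathrm{id}$, and natural 2-cells $\nu_{g,f}:\mathcal{F}(g)\circ\mathcal{F}(f)\Rightarrow\mathcal{F}(f)\circ\mathcal{F}(g)$ for 1-endocells $f,g$ of a common object satisfying: the Yang–Baxter equation; $(1\circ\mathcal{F}_0)\cdot\nu_{\mathrm{id},f}\cdot(\mathcal{F}^0\circ1)=1=(\mathcal{F}_0\circ1)\cdot\nu_{f,\mathrm{id}}\cdot(1\circ\mathcal{F}^0)$; $\nu_{hg,f}\cdot(\mathcal{F}^2_{h,g}\circ1)=(1\circ\mathcal{F}^2_{h,g})\cdot(\nu_{h,f}\circ1)\cdot(1\circ\nu_{g,f})$; $\nu_{\mathrm{id},f}\cdot(\mathcal{F}^0\circ1)=1\circ\mathcal{F}^0$; $\nu_{h,gf}\cdot(1\circ\mathcal{F}^2_{g,f})=(\mathcal{F}^2_{g,f}\circ1)\cdot(1\circ\nu_{h,f})\cdot(\nu_{h,g}\circ1)$;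 $\nu_{f,\mathrm{id}}\cdot(1\circ\mathcal{F}^0)=\mathcal{F}^0\circ1$; $(\mathcal{F}_{2;h,g}\circ1)\cdot\nu_{f,hg}=(1\circ\nu_{f,g})\cdot(\nu_{f,h}\circ1)\cdot(1\circ\mathcal{F}_{2;h,g})$; $(\mathcal{F}_0\circ1)\cdot\nu_{f,\mathrm{id}}=1\circ\mathcal{F}_0$; $(1\circ\mathcal{F}_{2;g,f})\cdot\nu_{gf,h}=(\nu_{g,h}\circ1)\cdot(1\circ\nu_{f,h})\cdot(\mathcal{F}_{2;g,f}\circ1)$; $(1\circ\mathcal{F}_0)\cdot\nu_{\mathrm{id},f}=\mathcal{F}_0\circ1$; and for $A\xrightarrow{k}B\xrightarrow{h}B\xrightarrow{f}B\xrightarrow{g}C$: $(\mathcal{F}^2_{g,h}\circ\mathcal{F}^2_{f,k})\cdot(1\circ\nu_{f,h}\circ1)\cdot(\mathcal{F}_{2;g,f}\circ\mathcal{F}_{2;h,k})=\mathcal{F}_{2;gh,fk}\cdot\mathcal{F}(1_g\circ c_{f,h}\circ1_k)\cdot\mathcal{F}^2_{gf,hk}$, $\mathcal{F}^0\circ\mathcal{F}^0=\mathcal{F}_{2;\mathrm{id},\mathrm{id}}\cdot\mathcal{F}^0$, $\mathcal{F}_0\circ\mathcal{F}_0=\mathcal{F}_0\cdot\mathcal{F}^2_{\mathrm{id},\mathrm{id}}$, $\mathcal{F}_0\cdot\mathcal{F}^0=1$. *)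

theory Defs
  imports Main
begin

section \<open>Strict 2-categories, presented as records\<close>

text \<open>Objects of type 'o, 1-cells of type 'a, 2-cells of type 'c.
  comp K g f is the composite g o f of f : A -> B and g : B -> C.
  vcomp K beta alpha is beta . alpha (first alpha).
  hcomp K beta alpha is beta o alpha, for alpha : f => f', beta : g => g' with g o f defined.\<close>

record ('o, 'a, 'c) twocat =
  ob    :: "'o set"
  hom   :: "'a set"
  src   :: "'a \<Rightarrow> 'o"
  trg   :: "'a \<Rightarrow> 'o"
  idc   :: "'o \<Rightarrow> 'a"
  comp  :: "'a \<Rightarrow> 'a \<Rightarrow> 'a"
  cell  :: "'c set"
  dom2  :: "'c \<Rightarrow> 'a"
  cod2  :: "'c \<Rightarrow> 'a"
  id2   :: "'a \<Rightarrow> 'c"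
  vcomp :: "'c \<Rightarrow> 'c \<Rightarrow> 'c"
  hcomp :: "'c \<Rightarrow> 'c \<Rightarrow> 'c"

definition cell_in :: "('o,'a,'c) twocat \<Rightarrow> 'c \<Rightarrow> 'a \<Rightarrow> 'a \<Rightarrow> bool" where
  "cell_in K \<alpha> f g \<longleftrightarrow> \<alpha> \<in> cell K \<and> dom2 K \<alpha> = f \<and> cod2 K \<alpha> = g"

definition endo :: "('o,'a,'c) twocat \<Rightarrow> 'o \<Rightarrow> 'a \<Rightarrow> bool" where
  "endo K A f \<longleftrightarrow> f \<in> hom K \<and> src K f = A \<and> trg K f = A"

definition strict_2cat :: "('o,'a,'c) twocat \<Rightarrow> bool" where
  "strict_2cat K \<longleftrightarrow>
    (\<forall>f\<in>hom K. src K f \<in> ob K \<and> trg K f \<in> ob K) \<and>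
    (\<forall>A\<in>ob K. idc K A \<in> hom K \<and> src K (idc K A) = A \<and> trg K (idc K A) = A) \<and>
    (\<forall>f\<in>hom K. \<forall>g\<in>hom K. trg K f = src K g \<longrightarrow>
        comp K g f \<in> hom K \<and> src K (comp K g f) = src K f \<and> trg K (comp K g f) = trg K g) \<and>
    (\<forall>f\<in>hom K. comp K (idc K (trg K f)) f = f \<and> comp K f (idc K (src K f)) = f) \<and>
    (\<forall>f\<in>hom K. \<forall>g\<in>hom K. \<forall>h\<in>hom K. trg K f = src K g \<and> trg K g = src K h \<longrightarrow>
        comp K h (comp K g f) = comp K (comp K h g) f) \<and>
    (\<forall>\<alpha>\<in>cell K. dom2 K \<alpha> \<in> hom K \<and> cod2 K \<alpha> \<in> hom K \<and>
        src K (dom2 K \<alpha>) = src K (cod2 K \<alpha>) \<and> trg K (dom2 K \<alpha>) = trg K (cod2 K \<alpha>)) \<and>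
    (\<forall>f\<in>hom K. cell_in K (id2 K f) f f) \<and>
    (\<forall>\<alpha>\<in>cell K. \<forall>\<beta>\<in>cell K. cod2 K \<alpha> = dom2 K \<beta> \<longrightarrow>
        cell_in K (vcomp K \<beta> \<alpha>) (dom2 K \<alpha>) (cod2 K \<beta>)) \<and>
    (\<forall>\<alpha>\<in>cell K. vcomp K \<alpha> (id2 K (dom2 K \<alpha>)) = \<alpha> \<and> vcomp K (id2 K (cod2 K \<alpha>)) \<alpha> = \<alpha>) \<and>
    (\<forall>\<alpha>\<in>cell K. \<forall>\<beta>\<in>cell K. \<forall>\<gamma>\<in>cell K. cod2 K \<alpha> = dom2 K \<beta> \<and> cod2 K \<beta> = dom2 K \<gamma> \<longrightarrow>
        vcomp K \<gamma> (vcomp K \<beta> \<alpha>) = vcomp K (vcomp K \<gamma> \<beta>) \<alpha>) \<and>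
    (\<forall>\<alpha>\<in>cell K. \<forall>\<beta>\<in>cell K. trg K (dom2 K \<alpha>) = src K (dom2 K \<beta>) \<longrightarrow>
        cell_in K (hcomp K \<beta> \<alpha>) (comp K (dom2 K \<beta>) (dom2 K \<alpha>)) (comp K (cod2 K \<beta>) (cod2 K \<alpha>))) \<and>
    (\<forall>\<alpha>\<in>cell K. hcomp K (id2 K (idc K (trg K (dom2 K \<alpha>)))) \<alpha> = \<alpha> \<and>
        hcomp K \<alpha> (id2 K (idc K (src K (dom2 K \<alpha>)))) = \<alpha>) \<and>
    (\<forall>\<alpha>\<in>cell K. \<forall>\<beta>\<in>cell K. \<forall>\<gamma>\<in>cell K.
        trg K (dom2 K \<alpha>) = src K (dom2 K \<beta>) \<and> trg K (dom2 K \<beta>) = src K (dom2 K \<gamma>) \<longrightarrow>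
        hcomp K \<gamma> (hcomp K \<beta> \<alpha>) = hcomp K (hcomp K \<gamma> \<beta>) \<alpha>) \<and>
    (\<forall>f\<in>hom K. \<forall>g\<in>hom K. trg K f = src K g \<longrightarrow>
        hcomp K (id2 K g) (id2 K f) = id2 K (comp K g f)) \<and>
    (\<forall>\<alpha>\<in>cell K. \<forall>\<alpha>'\<in>cell K. \<forall>\<beta>\<in>cell K. \<forall>\<beta>'\<in>cell K.
        cod2 K \<alpha> = dom2 K \<alpha>' \<and> cod2 K \<beta> = dom2 K \<beta>' \<and> trg K (dom2 K \<alpha>) = src K (dom2 K \<beta>) \<longrightarrow>
        hcomp K (vcomp K \<beta>' \<beta>) (vcomp K \<alpha>' \<alpha>) = vcomp K (hcomp K \<beta>' \<alpha>') (hcomp K \<beta> \<alpha>))"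

definition yb_operator :: "('o,'a,'c) twocat \<Rightarrow> ('a \<Rightarrow> 'a \<Rightarrow> 'c) \<Rightarrow> bool" where
  "yb_operator K c \<longleftrightarrow>
    (\<forall>A\<in>ob K. \<forall>f g. endo K A f \<and> endo K A g \<longrightarrow>
        cell_in K (c g f) (comp K g f) (comp K f g)) \<and>
    (\<forall>A\<in>ob K. \<forall>\<alpha>\<in>cell K. \<forall>\<beta>\<in>cell K. endo K A (dom2 K \<alpha>) \<and> endo K A (dom2 K \<beta>) \<longrightarrow>
        vcomp K (c (cod2 K \<beta>) (cod2 K \<alpha>)) (hcomp K \<beta> \<alpha>)
          = vcomp K (hcomp K \<alpha> \<beta>) (c (dom2 K \<beta>) (dom2 K \<alpha>))) \<and>
    (\<forall>A\<in>ob K. \<forall>f g h. endo K A f \<and> endo K A g \<and> endo K A h \<longrightarrow>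
        vcomp K (hcomp K (c g f) (id2 K h))
          (vcomp K (hcomp K (id2 K g) (c h f)) (hcomp K (c h g) (id2 K f)))
        = vcomp K (hcomp K (id2 K f) (c h g))
          (vcomp K (hcomp K (c h f) (id2 K g)) (hcomp K (id2 K h) (c g f)))) \<and>
    (\<forall>A\<in>ob K. \<forall>f. endo K A f \<longrightarrow> c (idc K A) f = id2 K f \<and> c f (idc K A) = id2 K f)"

definition monad2 :: "('o,'a,'c) twocat \<Rightarrow> 'o \<Rightarrow> 'a \<Rightarrow> 'c \<Rightarrow> 'c \<Rightarrow> bool" where
  "monad2 K A b \<mu> \<eta> \<longleftrightarrow> endo K A b \<and>
    cell_in K \<mu> (comp K b b) b \<and> cell_in K \<eta> (idc K A) b \<and>
    vcomp K \<mu> (hcomp K \<mu> (id2 K b)) = vcomp K \<mu> (hcomp K (id2 K b) \<mu>) \<and>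
    vcomp K \<mu> (hcomp K \<eta> (id2 K b)) = id2 K b \<and>
    vcomp K \<mu> (hcomp K (id2 K b) \<eta>) = id2 K b"

definition comonad2 :: "('o,'a,'c) twocat \<Rightarrow> 'o \<Rightarrow> 'a \<Rightarrow> 'c \<Rightarrow> 'c \<Rightarrow> bool" where
  "comonad2 K A b \<Delta> \<epsilon> \<longleftrightarrow> endo K A b \<and>
    cell_in K \<Delta> b (comp K b b) \<and> cell_in K \<epsilon> b (idc K A) \<and>
    vcomp K (hcomp K \<Delta> (id2 K b)) \<Delta> = vcomp K (hcomp K (id2 K b) \<Delta>) \<Delta> \<and>
    vcomp K (hcomp K \<epsilon> (id2 K b)) \<Delta> = id2 K b \<and>
    vcomp K (hcomp K (id2 K b) \<epsilon>) \<Delta> = id2 K b"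

definition tau_bimonad :: "('o,'a,'c) twocat \<Rightarrow> 'o \<Rightarrow> 'a \<Rightarrow> 'c \<Rightarrow> 'c \<Rightarrow> 'c \<Rightarrow> 'c \<Rightarrow> 'c \<Rightarrow> bool" where
  "tau_bimonad K A b \<mu> \<eta> \<Delta> \<epsilon> \<tau> \<longleftrightarrow>
    monad2 K A b \<mu> \<eta> \<and> comonad2 K A b \<Delta> \<epsilon> \<and>
    cell_in K \<tau> (comp K b b) (comp K b b) \<and>
    vcomp K \<tau> (hcomp K \<mu> (id2 K b))
      = vcomp K (hcomp K (id2 K b) \<mu>) (vcomp K (hcomp K \<tau> (id2 K b)) (hcomp K (id2 K b) \<tau>)) \<and>
    vcomp K \<tau> (hcomp K \<eta> (id2 K b)) = hcomp K (id2 K b) \<eta> \<and>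
    vcomp K \<tau> (hcomp K (id2 K b) \<mu>)
      = vcomp K (hcomp K \<mu> (id2 K b)) (vcomp K (hcomp K (id2 K b) \<tau>) (hcomp K \<tau> (id2 K b))) \<and>
    vcomp K \<tau> (hcomp K (id2 K b) \<eta>) = hcomp K \<eta> (id2 K b) \<and>
    vcomp K (hcomp K \<Delta> (id2 K b)) \<tau>
      = vcomp K (hcomp K (id2 K b) \<tau>) (vcomp K (hcomp K \<tau> (id2 K b)) (hcomp K (id2 K b) \<Delta>)) \<and>
    vcomp K (hcomp K \<epsilon> (id2 K b)) \<tau> = hcomp K (id2 K b) \<epsilon> \<and>
    vcomp K (hcomp K (id2 K b) \<Delta>) \<tau>
      = vcomp K (hcomp K \<tau> (id2 K b)) (vcomp K (hcomp K (id2 K b) \<tau>) (hcomp K \<Delta> (id2 K b))) \<and>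
    vcomp K (hcomp K (id2 K b) \<epsilon>) \<tau> = hcomp K \<epsilon> (id2 K b) \<and>
    vcomp K (hcomp K \<mu> \<mu>) (vcomp K (hcomp K (id2 K b) (hcomp K \<tau> (id2 K b))) (hcomp K \<Delta> \<Delta>))
      = vcomp K \<Delta> \<mu> \<and>
    hcomp K \<epsilon> \<epsilon> = vcomp K \<epsilon> \<mu> \<and>
    hcomp K \<eta> \<eta> = vcomp K \<Delta> \<eta> \<and>
    vcomp K \<epsilon> \<eta> = id2 K (idc K A)"

definition c_bimonad :: "('o,'a,'c) twocat \<Rightarrow> ('a \<Rightarrow> 'a \<Rightarrow> 'c) \<Rightarrow> 'o \<Rightarrow> 'a \<Rightarrow> 'c \<Rightarrow> 'c \<Rightarrow> 'c \<Rightarrow> 'c \<Rightarrow> bool" where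
  "c_bimonad K c A b \<mu> \<eta> \<Delta> \<epsilon> \<longleftrightarrow> tau_bimonad K A b \<mu> \<eta> \<Delta> \<epsilon> (c b b)"

definition functor_data :: "('o,'a,'c) twocat \<Rightarrow> ('p,'b,'d) twocat \<Rightarrow>
    ('o \<Rightarrow> 'p) \<Rightarrow> ('a \<Rightarrow> 'b) \<Rightarrow> ('c \<Rightarrow> 'd) \<Rightarrow> bool" where
  "functor_data K K' F0 F1 F2 \<longleftrightarrow>
    (\<forall>A\<in>ob K. F0 A \<in> ob K') \<and>
    (\<forall>f\<in>hom K. F1 f \<in> hom K' \<and> src K' (F1 f) = F0 (src K f) \<and> trg K' (F1 f) = F0 (trg K f)) \<and>
    (\<forall>\<alpha>\<in>cell K. cell_in K' (F2 \<alpha>) (F1 (dom2 K \<alpha>)) (F1 (cod2 K \<alpha>))) \<and>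
    (\<forall>f\<in>hom K. F2 (id2 K f) = id2 K' (F1 f)) \<and>
    (\<forall>\<alpha>\<in>cell K. \<forall>\<beta>\<in>cell K. cod2 K \<alpha> = dom2 K \<beta> \<longrightarrow>
        F2 (vcomp K \<beta> \<alpha>) = vcomp K' (F2 \<beta>) (F2 \<alpha>))"

text \<open>Lax structure: L2 g f = F^2_{g,f} : F g o F f => F (g f), L0 A = F^0_A : id => F(id_A).\<close>
definition lax_structure :: "('o,'a,'c) twocat \<Rightarrow> ('p,'b,'d) twocat \<Rightarrow>
    ('o \<Rightarrow> 'p) \<Rightarrow> ('a \<Rightarrow> 'b) \<Rightarrow> ('c \<Rightarrow> 'd) \<Rightarrow> ('a \<Rightarrow> 'a \<Rightarrow> 'd) \<Rightarrow> ('o \<Rightarrow> 'd) \<Rightarrow> bool" where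
  "lax_structure K K' F0 F1 F2 L2 L0 \<longleftrightarrow>
    (\<forall>f\<in>hom K. \<forall>g\<in>hom K. trg K f = src K g \<longrightarrow>
        cell_in K' (L2 g f) (comp K' (F1 g) (F1 f)) (F1 (comp K g f))) \<and>
    (\<forall>A\<in>ob K. cell_in K' (L0 A) (idc K' (F0 A)) (F1 (idc K A))) \<and>
    (\<forall>\<alpha>\<in>cell K. \<forall>\<beta>\<in>cell K. trg K (dom2 K \<alpha>) = src K (dom2 K \<beta>) \<longrightarrow>
        vcomp K' (F2 (hcomp K \<beta> \<alpha>)) (L2 (dom2 K \<beta>) (dom2 K \<alpha>))
          = vcomp K' (L2 (cod2 K \<beta>) (cod2 K \<alpha>)) (hcomp K' (F2 \<beta>) (F2 \<alpha>))) \<and>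
    (\<forall>f\<in>hom K. \<forall>g\<in>hom K. \<forall>h\<in>hom K. trg K f = src K g \<and> trg K g = src K h \<longrightarrow>
        vcomp K' (L2 (comp K h g) f) (hcomp K' (L2 h g) (id2 K' (F1 f)))
          = vcomp K' (L2 h (comp K g f)) (hcomp K' (id2 K' (F1 h)) (L2 g f))) \<and>
    (\<forall>f\<in>hom K. vcomp K' (L2 (idc K (trg K f)) f) (hcomp K' (L0 (trg K f)) (id2 K' (F1 f)))
          = id2 K' (F1 f) \<and>
        vcomp K' (L2 f (idc K (src K f))) (hcomp K' (id2 K' (F1 f)) (L0 (src K f)))
          = id2 K' (F1 f))"

text \<open>Colax structure: C2 g f = F_{2;g,f} : F (g f) => F g o F f, C0 A = F_{0;A} : F(id_A) => id.\<close>
definition colax_structure :: "('o,'a,'c) twocat \<Rightarrow> ('p,'b,'d) twocat \<Rightarrow>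
    ('o \<Rightarrow> 'p) \<Rightarrow> ('a \<Rightarrow> 'b) \<Rightarrow> ('c \<Rightarrow> 'd) \<Rightarrow> ('a \<Rightarrow> 'a \<Rightarrow> 'd) \<Rightarrow> ('o \<Rightarrow> 'd) \<Rightarrow> bool" where
  "colax_structure K K' F0 F1 F2 C2 C0 \<longleftrightarrow>
    (\<forall>f\<in>hom K. \<forall>g\<in>hom K. trg K f = src K g \<longrightarrow>
        cell_in K' (C2 g f) (F1 (comp K g f)) (comp K' (F1 g) (F1 f))) \<and>
    (\<forall>A\<in>ob K. cell_in K' (C0 A) (F1 (idc K A)) (idc K' (F0 A))) \<and>
    (\<forall>\<alpha>\<in>cell K. \<forall>\<beta>\<in>cell K. trg K (dom2 K \<alpha>) = src K (dom2 K \<beta>) \<longrightarrow>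
        vcomp K' (hcomp K' (F2 \<beta>) (F2 \<alpha>)) (C2 (dom2 K \<beta>) (dom2 K \<alpha>))
          = vcomp K' (C2 (cod2 K \<beta>) (cod2 K \<alpha>)) (F2 (hcomp K \<beta> \<alpha>))) \<and>
    (\<forall>f\<in>hom K. \<forall>g\<in>hom K. \<forall>h\<in>hom K. trg K f = src K g \<and> trg K g = src K h \<longrightarrow>
        vcomp K' (hcomp K' (C2 h g) (id2 K' (F1 f))) (C2 (comp K h g) f)
          = vcomp K' (hcomp K' (id2 K' (F1 h)) (C2 g f)) (C2 h (comp K g f))) \<and>
    (\<forall>f\<in>hom K. vcomp K' (hcomp K' (C0 (trg K f)) (id2 K' (F1 f))) (C2 (idc K (trg K f)) f)
          = id2 K' (F1 f) \<and>
        vcomp K' (hcomp K' (id2 K' (F1 f)) (C0 (src K f))) (C2 f (idc K (src K f)))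
          = id2 K' (F1 f))"

text \<open>Bilax functor (F, nu) : (K, c) -> K'. Here nu g f = nu_{g,f} : F g o F f => F f o F g.\<close>
definition bilax_functor :: "('o,'a,'c) twocat \<Rightarrow> ('a \<Rightarrow> 'a \<Rightarrow> 'c) \<Rightarrow> ('p,'b,'d) twocat \<Rightarrow>
    ('o \<Rightarrow> 'p) \<Rightarrow> ('a \<Rightarrow> 'b) \<Rightarrow> ('c \<Rightarrow> 'd) \<Rightarrow>
    ('a \<Rightarrow> 'a \<Rightarrow> 'd) \<Rightarrow> ('o \<Rightarrow> 'd) \<Rightarrow> ('a \<Rightarrow> 'a \<Rightarrow> 'd) \<Rightarrow> ('o \<Rightarrow> 'd) \<Rightarrow>
    ('a \<Rightarrow> 'a \<Rightarrow> 'd) \<Rightarrow> bool" where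
  "bilax_functor K c K' F0 F1 F2 L2 L0 C2 C0 \<nu> \<longleftrightarrow>
    functor_data K K' F0 F1 F2 \<and>
    lax_structure K K' F0 F1 F2 L2 L0 \<and>
    colax_structure K K' F0 F1 F2 C2 C0 \<and>
    \<comment> \<open>typing of nu\<close>
    (\<forall>A\<in>ob K. \<forall>f g. endo K A f \<and> endo K A g \<longrightarrow>
        cell_in K' (\<nu> g f) (comp K' (F1 g) (F1 f)) (comp K' (F1 f) (F1 g))) \<and>
    \<comment> \<open>naturality of nu\<close>
    (\<forall>A\<in>ob K. \<forall>\<alpha>\<in>cell K. \<forall>\<beta>\<in>cell K. endo K A (dom2 K \<alpha>) \<and> endo K A (dom2 K \<beta>) \<longrightarrow>
        vcomp K' (\<nu> (cod2 K \<beta>) (cod2 K \<alpha>)) (hcomp K' (F2 \<beta>) (F2 \<alpha>))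
          = vcomp K' (hcomp K' (F2 \<alpha>) (F2 \<beta>)) (\<nu> (dom2 K \<beta>) (dom2 K \<alpha>))) \<and>
    \<comment> \<open>Yang--Baxter equation\<close>
    (\<forall>A\<in>ob K. \<forall>f g h. endo K A f \<and> endo K A g \<and> endo K A h \<longrightarrow>
        vcomp K' (hcomp K' (\<nu> g f) (id2 K' (F1 h)))
          (vcomp K' (hcomp K' (id2 K' (F1 g)) (\<nu> h f)) (hcomp K' (\<nu> h g) (id2 K' (F1 f))))
        = vcomp K' (hcomp K' (id2 K' (F1 f)) (\<nu> h g))
          (vcomp K' (hcomp K' (\<nu> h f) (id2 K' (F1 g))) (hcomp K' (id2 K' (F1 h)) (\<nu> g f)))) \<and>
    \<comment> \<open>unit conditions\<close>
    (\<forall>A\<in>ob K. \<forall>f. endo K A f \<longrightarrow>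
        vcomp K' (hcomp K' (id2 K' (F1 f)) (C0 A))
          (vcomp K' (\<nu> (idc K A) f) (hcomp K' (L0 A) (id2 K' (F1 f)))) = id2 K' (F1 f) \<and>
        vcomp K' (hcomp K' (C0 A) (id2 K' (F1 f)))
          (vcomp K' (\<nu> f (idc K A)) (hcomp K' (id2 K' (F1 f)) (L0 A))) = id2 K' (F1 f)) \<and>
    \<comment> \<open>compatibility of nu with the lax structure\<close>
    (\<forall>A\<in>ob K. \<forall>f g h. endo K A f \<and> endo K A g \<and> endo K A h \<longrightarrow>
        vcomp K' (\<nu> (comp K h g) f) (hcomp K' (L2 h g) (id2 K' (F1 f)))
          = vcomp K' (hcomp K' (id2 K' (F1 f)) (L2 h g))
              (vcomp K' (hcomp K' (\<nu> h f) (id2 K' (F1 g))) (hcomp K' (id2 K' (F1 h)) (\<nu> g f)))) \<and>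
    (\<forall>A\<in>ob K. \<forall>f. endo K A f \<longrightarrow>
        vcomp K' (\<nu> (idc K A) f) (hcomp K' (L0 A) (id2 K' (F1 f)))
          = hcomp K' (id2 K' (F1 f)) (L0 A)) \<and>
    (\<forall>A\<in>ob K. \<forall>f g h. endo K A f \<and> endo K A g \<and> endo K A h \<longrightarrow>
        vcomp K' (\<nu> h (comp K g f)) (hcomp K' (id2 K' (F1 h)) (L2 g f))
          = vcomp K' (hcomp K' (L2 g f) (id2 K' (F1 h)))
              (vcomp K' (hcomp K' (id2 K' (F1 g)) (\<nu> h f)) (hcomp K' (\<nu> h g) (id2 K' (F1 f))))) \<and>
    (\<forall>A\<in>ob K. \<forall>f. endo K A f \<longrightarrow>
        vcomp K' (\<nu> f (idc K A)) (hcomp K' (id2 K' (F1 f)) (L0 A))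
          = hcomp K' (L0 A) (id2 K' (F1 f))) \<and>
    \<comment> \<open>compatibility of nu with the colax structure\<close>
    (\<forall>A\<in>ob K. \<forall>f g h. endo K A f \<and> endo K A g \<and> endo K A h \<longrightarrow>
        vcomp K' (hcomp K' (C2 h g) (id2 K' (F1 f))) (\<nu> f (comp K h g))
          = vcomp K' (hcomp K' (id2 K' (F1 h)) (\<nu> f g))
              (vcomp K' (hcomp K' (\<nu> f h) (id2 K' (F1 g))) (hcomp K' (id2 K' (F1 f)) (C2 h g)))) \<and>
    (\<forall>A\<in>ob K. \<forall>f. endo K A f \<longrightarrow>
        vcomp K' (hcomp K' (C0 A) (id2 K' (F1 f))) (\<nu> f (idc K A))
          = hcomp K' (id2 K' (F1 f)) (C0 A)) \<and>
    (\<forall>A\<in>ob K. \<forall>f g h. endo K A f \<and> endo K A g \<and> endo K A h \<longrightarrow>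
        vcomp K' (hcomp K' (id2 K' (F1 h)) (C2 g f)) (\<nu> (comp K g f) h)
          = vcomp K' (hcomp K' (\<nu> g h) (id2 K' (F1 f)))
              (vcomp K' (hcomp K' (id2 K' (F1 g)) (\<nu> f h)) (hcomp K' (C2 g f) (id2 K' (F1 h))))) \<and>
    (\<forall>A\<in>ob K. \<forall>f. endo K A f \<longrightarrow>
        vcomp K' (hcomp K' (id2 K' (F1 f)) (C0 A)) (\<nu> (idc K A) f)
          = hcomp K' (C0 A) (id2 K' (F1 f))) \<and>
    \<comment> \<open>bilax compatibility, for A -k-> B -h-> B -f-> B -g-> C\<close>
    (\<forall>k\<in>hom K. \<forall>g\<in>hom K. \<forall>f h. endo K (trg K k) f \<and> endo K (trg K k) h \<and> src K g = trg K k \<longrightarrow>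
        vcomp K' (hcomp K' (L2 g h) (L2 f k))
          (vcomp K' (hcomp K' (id2 K' (F1 g)) (hcomp K' (\<nu> f h) (id2 K' (F1 k))))
             (hcomp K' (C2 g f) (C2 h k)))
        = vcomp K' (C2 (comp K g h) (comp K f k))
            (vcomp K' (F2 (hcomp K (id2 K g) (hcomp K (c f h) (id2 K k))))
               (L2 (comp K g f) (comp K h k)))) \<and>
    (\<forall>A\<in>ob K.
        hcomp K' (L0 A) (L0 A) = vcomp K' (C2 (idc K A) (idc K A)) (L0 A) \<and>
        hcomp K' (C0 A) (C0 A) = vcomp K' (C0 A) (L2 (idc K A) (idc K A)) \<and>
        vcomp K' (C0 A) (L0 A) = id2 K' (idc K' (F0 A)))"

end

theory Submission
  imports Defs
begin


context fixes K :: "('o,'a,'c) twocat" assumes S: "strict_2cat K" begin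

lemma s_hom_ob: "f \<in> hom K \<Longrightarrow> src K f \<in> ob K" "f \<in> hom K \<Longrightarrow> trg K f \<in> ob K"
  using S unfolding strict_2cat_def by auto
lemma s_idc: "X \<in> ob K \<Longrightarrow> idc K X \<in> hom K" "X \<in> ob K \<Longrightarrow> src K (idc K X) = X"
  "X \<in> ob K \<Longrightarrow> trg K (idc K X) = X"
  using S unfolding strict_2cat_def by auto
lemma s_comp: "f \<in> hom K \<Longrightarrow> g \<in> hom K \<Longrightarrow> trg K f = src K g \<Longrightarrow> comp K g f \<in> hom K"
  "f \<in> hom K \<Longrightarrow> g \<in> hom K \<Longrightarrow> trg K f = src K g \<Longrightarrow> src K (comp K g f) = src K f"
  "f \<in> hom K \<Longrightarrow> g \<in> hom K \<Longrightarrow> trg K f = src K g \<Longrightarrow> trg K (comp K g f) = trg K g"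
  using S unfolding strict_2cat_def by auto
lemma s_cunit: "f \<in> hom K \<Longrightarrow> trg K f = X \<Longrightarrow> comp K (idc K X) f = f"
  "f \<in> hom K \<Longrightarrow> src K f = X \<Longrightarrow> comp K f (idc K X) = f"
  using S unfolding strict_2cat_def by auto
lemma s_cassoc: "f \<in> hom K \<Longrightarrow> g \<in> hom K \<Longrightarrow> h \<in> hom K \<Longrightarrow> trg K f = src K g \<Longrightarrow> trg K g = src K h \<Longrightarrow>
  comp K h (comp K g f) = comp K (comp K h g) f"
  using S unfolding strict_2cat_def by auto
lemma s_cell: "\<alpha> \<in> cell K \<Longrightarrow> dom2 K \<alpha> \<in> hom K" "\<alpha> \<in> cell K \<Longrightarrow> cod2 K \<alpha> \<in> hom K"
  "\<alpha> \<in> cell K \<Longrightarrow> src K (cod2 K \<alpha>) = src K (dom2 K \<alpha>)"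
  "\<alpha> \<in> cell K \<Longrightarrow> trg K (cod2 K \<alpha>) = trg K (dom2 K \<alpha>)"
  using S unfolding strict_2cat_def by auto
lemma s_id2: "f \<in> hom K \<Longrightarrow> id2 K f \<in> cell K" "f \<in> hom K \<Longrightarrow> dom2 K (id2 K f) = f"
  "f \<in> hom K \<Longrightarrow> cod2 K (id2 K f) = f"
  using S unfolding strict_2cat_def cell_in_def by auto
lemma s_vcomp: "\<alpha> \<in> cell K \<Longrightarrow> \<beta> \<in> cell K \<Longrightarrow> cod2 K \<alpha> = dom2 K \<beta> \<Longrightarrow> vcomp K \<beta> \<alpha> \<in> cell K"
  "\<alpha> \<in> cell K \<Longrightarrow> \<beta> \<in> cell K \<Longrightarrow> cod2 K \<alpha> = dom2 K \<beta> \<Longrightarrow> dom2 K (vcomp K \<beta> \<alpha>) = dom2 K \<alpha>"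
  "\<alpha> \<in> cell K \<Longrightarrow> \<beta> \<in> cell K \<Longrightarrow> cod2 K \<alpha> = dom2 K \<beta> \<Longrightarrow> cod2 K (vcomp K \<beta> \<alpha>) = cod2 K \<beta>"
  using S unfolding strict_2cat_def cell_in_def by auto
lemma s_vid: "\<alpha> \<in> cell K \<Longrightarrow> dom2 K \<alpha> = f \<Longrightarrow> vcomp K \<alpha> (id2 K f) = \<alpha>"
  "\<alpha> \<in> cell K \<Longrightarrow> cod2 K \<alpha> = f \<Longrightarrow> vcomp K (id2 K f) \<alpha> = \<alpha>"
  using S unfolding strict_2cat_def by auto
lemma s_vassoc: "\<alpha> \<in> cell K \<Longrightarrow> \<beta> \<in> cell K \<Longrightarrow> \<gamma> \<in> cell K \<Longrightarrow> cod2 K \<alpha> = dom2 K \<beta> \<Longrightarrow> cod2 K \<beta> = dom2 K \<gamma> \<Longrightarrow>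
  vcomp K (vcomp K \<gamma> \<beta>) \<alpha> = vcomp K \<gamma> (vcomp K \<beta> \<alpha>)"
  using S unfolding strict_2cat_def by auto
lemma s_hcomp: "\<alpha> \<in> cell K \<Longrightarrow> \<beta> \<in> cell K \<Longrightarrow> trg K (dom2 K \<alpha>) = src K (dom2 K \<beta>) \<Longrightarrow> hcomp K \<beta> \<alpha> \<in> cell K"
  "\<alpha> \<in> cell K \<Longrightarrow> \<beta> \<in> cell K \<Longrightarrow> trg K (dom2 K \<alpha>) = src K (dom2 K \<beta>) \<Longrightarrow> dom2 K (hcomp K \<beta> \<alpha>) = comp K (dom2 K \<beta>) (dom2 K \<alpha>)"
  "\<alpha> \<in> cell K \<Longrightarrow> \<beta> \<in> cell K \<Longrightarrow> trg K (dom2 K \<alpha>) = src K (dom2 K \<beta>) \<Longrightarrow> cod2 K (hcomp K \<beta> \<alpha>) = comp K (cod2 K \<beta>) (cod2 K \<alpha>)"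
  using S unfolding strict_2cat_def cell_in_def by auto
lemma s_hid: "\<alpha> \<in> cell K \<Longrightarrow> trg K (dom2 K \<alpha>) = X \<Longrightarrow> hcomp K (id2 K (idc K X)) \<alpha> = \<alpha>"
  "\<alpha> \<in> cell K \<Longrightarrow> src K (dom2 K \<alpha>) = X \<Longrightarrow> hcomp K \<alpha> (id2 K (idc K X)) = \<alpha>"
  using S unfolding strict_2cat_def by auto
lemma s_hassoc: "\<alpha> \<in> cell K \<Longrightarrow> \<beta> \<in> cell K \<Longrightarrow> \<gamma> \<in> cell K \<Longrightarrow>
   trg K (dom2 K \<alpha>) = src K (dom2 K \<beta>) \<Longrightarrow> trg K (dom2 K \<beta>) = src K (dom2 K \<gamma>) \<Longrightarrow>
        hcomp K \<gamma> (hcomp K \<beta> \<alpha>) = hcomp K (hcomp K \<gamma> \<beta>) \<alpha>"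
  using S unfolding strict_2cat_def by auto
lemma s_hid2: "f \<in> hom K \<Longrightarrow> g \<in> hom K \<Longrightarrow> trg K f = src K g \<Longrightarrow>
        hcomp K (id2 K g) (id2 K f) = id2 K (comp K g f)"
  using S unfolding strict_2cat_def by auto
lemma s_xch: "\<alpha> \<in> cell K \<Longrightarrow> \<alpha>' \<in> cell K \<Longrightarrow> \<beta> \<in> cell K \<Longrightarrow> \<beta>' \<in> cell K \<Longrightarrow>
        cod2 K \<alpha> = dom2 K \<alpha>' \<Longrightarrow> cod2 K \<beta> = dom2 K \<beta>' \<Longrightarrow> trg K (dom2 K \<alpha>) = src K (dom2 K \<beta>) \<Longrightarrow>
        hcomp K (vcomp K \<beta>' \<beta>) (vcomp K \<alpha>' \<alpha>) = vcomp K (hcomp K \<beta>' \<alpha>') (hcomp K \<beta> \<alpha>)"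
  using S unfolding strict_2cat_def by auto
lemma s_xch_l: "\<beta> \<in> cell K \<Longrightarrow> \<beta>' \<in> cell K \<Longrightarrow> cod2 K \<beta> = dom2 K \<beta>' \<Longrightarrow> f \<in> hom K \<Longrightarrow> trg K f = src K (dom2 K \<beta>) \<Longrightarrow>
   hcomp K (vcomp K \<beta>' \<beta>) (id2 K f) = vcomp K (hcomp K \<beta>' (id2 K f)) (hcomp K \<beta> (id2 K f))"
  by (metis s_id2 s_vid(1) s_xch)
lemma s_xch_r: "\<alpha> \<in> cell K \<Longrightarrow> \<alpha>' \<in> cell K \<Longrightarrow> cod2 K \<alpha> = dom2 K \<alpha>' \<Longrightarrow> g \<in> hom K \<Longrightarrow> trg K (dom2 K \<alpha>) = src K g \<Longrightarrow>
   hcomp K (id2 K g) (vcomp K \<alpha>' \<alpha>) = vcomp K (hcomp K (id2 K g) \<alpha>') (hcomp K (id2 K g) \<alpha>)"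
  by (metis s_id2 s_vid(1) s_xch)
lemma s_vext: "vcomp K X Y = vcomp K Z W \<Longrightarrow> X \<in> cell K \<Longrightarrow> Y \<in> cell K \<Longrightarrow> Z \<in> cell K \<Longrightarrow> W \<in> cell K \<Longrightarrow> R \<in> cell K \<Longrightarrow>
  cod2 K R = dom2 K Y \<Longrightarrow> cod2 K Y = dom2 K X \<Longrightarrow> cod2 K W = dom2 K Z \<Longrightarrow>
  vcomp K X (vcomp K Y R) = vcomp K Z (vcomp K W R)"
  by (metis s_vassoc s_vcomp(2))
lemma s_vext_id: "vcomp K X Y = id2 K f \<Longrightarrow> X \<in> cell K \<Longrightarrow> Y \<in> cell K \<Longrightarrow> R \<in> cell K \<Longrightarrow>
  cod2 K R = dom2 K Y \<Longrightarrow> cod2 K Y = dom2 K X \<Longrightarrow> f \<in> hom K \<Longrightarrow>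
  vcomp K X (vcomp K Y R) = R"
  by (metis s_id2(2) s_vassoc s_vcomp(2) s_vid(2))
lemma s_vext3: "vcomp K X (vcomp K Y Z) = vcomp K P (vcomp K Q S) \<Longrightarrow> X \<in> cell K \<Longrightarrow> Y \<in> cell K \<Longrightarrow> Z \<in> cell K \<Longrightarrow>
  P \<in> cell K \<Longrightarrow> Q \<in> cell K \<Longrightarrow> S \<in> cell K \<Longrightarrow> R \<in> cell K \<Longrightarrow>
  cod2 K R = dom2 K Z \<Longrightarrow> cod2 K Z = dom2 K Y \<Longrightarrow> cod2 K Y = dom2 K X \<Longrightarrow>
  cod2 K S = dom2 K Q \<Longrightarrow> cod2 K Q = dom2 K P \<Longrightarrow>
  vcomp K X (vcomp K Y (vcomp K Z R)) = vcomp K P (vcomp K Q (vcomp K S R))"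
proof -
  assume e: "vcomp K X (vcomp K Y Z) = vcomp K P (vcomp K Q S)" and c: "X \<in> cell K" "Y \<in> cell K" "Z \<in> cell K"
  "P \<in> cell K" "Q \<in> cell K" "S \<in> cell K" "R \<in> cell K"
  "cod2 K R = dom2 K Z" "cod2 K Z = dom2 K Y" "cod2 K Y = dom2 K X"
  "cod2 K S = dom2 K Q" "cod2 K Q = dom2 K P"
  have yz: "vcomp K Y Z \<in> cell K" "dom2 K (vcomp K Y Z) = dom2 K Z" "cod2 K (vcomp K Y Z) = cod2 K Y"
    using c s_vcomp by auto
  have qs: "vcomp K Q S \<in> cell K" "dom2 K (vcomp K Q S) = dom2 K S" "cod2 K (vcomp K Q S) = cod2 K Q"
    using c s_vcomp by auto
  have d: "dom2 K S = dom2 K Z"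
    using arg_cong[OF e, of "dom2 K"] c yz qs s_vcomp(2) by metis
  have "vcomp K X (vcomp K Y (vcomp K Z R)) = vcomp K X (vcomp K (vcomp K Y Z) R)"
    using s_vassoc c by metis
  also have "\<dots> = vcomp K (vcomp K X (vcomp K Y Z)) R"
    using s_vassoc[of R "vcomp K Y Z" X] c yz by simp
  also have "\<dots> = vcomp K (vcomp K P (vcomp K Q S)) R" using e by simp
  also have "\<dots> = vcomp K P (vcomp K (vcomp K Q S) R)"
    using s_vassoc[of R "vcomp K Q S" P] c qs d by simp
  also have "\<dots> = vcomp K P (vcomp K Q (vcomp K S R))"
    using s_vassoc[of R S Q] c d by simp
  finally show ?thesis .
qed
lemma s_vext32: "vcomp K X (vcomp K Y Z) = vcomp K P Q \<Longrightarrow> X \<in> cell K \<Longrightarrow> Y \<in> cell K \<Longrightarrow> Z \<in> cell K \<Longrightarrow>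
  P \<in> cell K \<Longrightarrow> Q \<in> cell K \<Longrightarrow> R \<in> cell K \<Longrightarrow>
  cod2 K R = dom2 K Z \<Longrightarrow> cod2 K Z = dom2 K Y \<Longrightarrow> cod2 K Y = dom2 K X \<Longrightarrow>
  cod2 K Q = dom2 K P \<Longrightarrow>
  vcomp K X (vcomp K Y (vcomp K Z R)) = vcomp K P (vcomp K Q R)"
proof -
  assume e: "vcomp K X (vcomp K Y Z) = vcomp K P Q" and c: "X \<in> cell K" "Y \<in> cell K" "Z \<in> cell K"
  "P \<in> cell K" "Q \<in> cell K" "R \<in> cell K"
  "cod2 K R = dom2 K Z" "cod2 K Z = dom2 K Y" "cod2 K Y = dom2 K X"
  "cod2 K Q = dom2 K P"
  have yz: "vcomp K Y Z \<in> cell K" "dom2 K (vcomp K Y Z) = dom2 K Z" "cod2 K (vcomp K Y Z) = cod2 K Y"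
    using c s_vcomp by auto
  have d: "dom2 K Q = dom2 K Z"
    using arg_cong[OF e, of "dom2 K"] c yz s_vcomp(2) by metis
  have "vcomp K X (vcomp K Y (vcomp K Z R)) = vcomp K X (vcomp K (vcomp K Y Z) R)"
    using s_vassoc c by metis
  also have "\<dots> = vcomp K (vcomp K X (vcomp K Y Z)) R"
    using s_vassoc[of R "vcomp K Y Z" X] c yz by simp
  also have "\<dots> = vcomp K (vcomp K P Q) R" using e by simp
  also have "\<dots> = vcomp K P (vcomp K Q R)"
    using s_vassoc[of R Q P] c d by simp
  finally show ?thesis .
qed
end


lemma fd_facts: assumes "functor_data K K' F0 F1 F2"
  shows "A \<in> ob K \<Longrightarrow> F0 A \<in> ob K'"
    "f \<in> hom K \<Longrightarrow> F1 f \<in> hom K'" "f \<in> hom K \<Longrightarrow> src K' (F1 f) = F0 (src K f)"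
    "f \<in> hom K \<Longrightarrow> trg K' (F1 f) = F0 (trg K f)"
    "\<alpha> \<in> cell K \<Longrightarrow> F2 \<alpha> \<in> cell K'" "\<alpha> \<in> cell K \<Longrightarrow> dom2 K' (F2 \<alpha>) = F1 (dom2 K \<alpha>)"
    "\<alpha> \<in> cell K \<Longrightarrow> cod2 K' (F2 \<alpha>) = F1 (cod2 K \<alpha>)"
    "f \<in> hom K \<Longrightarrow> F2 (id2 K f) = id2 K' (F1 f)"
    "\<alpha> \<in> cell K \<Longrightarrow> \<beta> \<in> cell K \<Longrightarrow> cod2 K \<alpha> = dom2 K \<beta> \<Longrightarrow> F2 (vcomp K \<beta> \<alpha>) = vcomp K' (F2 \<beta>) (F2 \<alpha>)"
  using assms unfolding functor_data_def cell_in_def by auto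

lemma lax_facts: assumes "lax_structure K K' F0 F1 F2 L2 L0"
  shows "f \<in> hom K \<Longrightarrow> g \<in> hom K \<Longrightarrow> trg K f = src K g \<Longrightarrow> L2 g f \<in> cell K'"
    "f \<in> hom K \<Longrightarrow> g \<in> hom K \<Longrightarrow> trg K f = src K g \<Longrightarrow> dom2 K' (L2 g f) = comp K' (F1 g) (F1 f)"
    "f \<in> hom K \<Longrightarrow> g \<in> hom K \<Longrightarrow> trg K f = src K g \<Longrightarrow> cod2 K' (L2 g f) = F1 (comp K g f)"
    "A \<in> ob K \<Longrightarrow> L0 A \<in> cell K'" "A \<in> ob K \<Longrightarrow> dom2 K' (L0 A) = idc K' (F0 A)"
    "A \<in> ob K \<Longrightarrow> cod2 K' (L0 A) = F1 (idc K A)"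
  using assms unfolding lax_structure_def cell_in_def by auto

lemma colax_facts: assumes "colax_structure K K' F0 F1 F2 C2 C0"
  shows "f \<in> hom K \<Longrightarrow> g \<in> hom K \<Longrightarrow> trg K f = src K g \<Longrightarrow> C2 g f \<in> cell K'"
    "f \<in> hom K \<Longrightarrow> g \<in> hom K \<Longrightarrow> trg K f = src K g \<Longrightarrow> cod2 K' (C2 g f) = comp K' (F1 g) (F1 f)"
    "f \<in> hom K \<Longrightarrow> g \<in> hom K \<Longrightarrow> trg K f = src K g \<Longrightarrow> dom2 K' (C2 g f) = F1 (comp K g f)"
    "A \<in> ob K \<Longrightarrow> C0 A \<in> cell K'" "A \<in> ob K \<Longrightarrow> cod2 K' (C0 A) = idc K' (F0 A)"
    "A \<in> ob K \<Longrightarrow> dom2 K' (C0 A) = F1 (idc K A)"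
  using assms unfolding colax_structure_def cell_in_def by auto

lemma lax_more: assumes "lax_structure K K' F0 F1 F2 L2 L0"
  shows "\<alpha> \<in> cell K \<Longrightarrow> \<beta> \<in> cell K \<Longrightarrow> trg K (dom2 K \<alpha>) = src K (dom2 K \<beta>) \<Longrightarrow>
        vcomp K' (F2 (hcomp K \<beta> \<alpha>)) (L2 (dom2 K \<beta>) (dom2 K \<alpha>))
          = vcomp K' (L2 (cod2 K \<beta>) (cod2 K \<alpha>)) (hcomp K' (F2 \<beta>) (F2 \<alpha>))"
   "f \<in> hom K \<Longrightarrow> g \<in> hom K \<Longrightarrow> h \<in> hom K \<Longrightarrow> trg K f = src K g \<Longrightarrow> trg K g = src K h \<Longrightarrow>
        vcomp K' (L2 (comp K h g) f) (hcomp K' (L2 h g) (id2 K' (F1 f)))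
          = vcomp K' (L2 h (comp K g f)) (hcomp K' (id2 K' (F1 h)) (L2 g f))"
   "f \<in> hom K \<Longrightarrow> vcomp K' (L2 (idc K (trg K f)) f) (hcomp K' (L0 (trg K f)) (id2 K' (F1 f)))
          = id2 K' (F1 f)"
   "f \<in> hom K \<Longrightarrow> vcomp K' (L2 f (idc K (src K f))) (hcomp K' (id2 K' (F1 f)) (L0 (src K f)))
          = id2 K' (F1 f)"
  using assms unfolding lax_structure_def by auto

lemma colax_more: assumes "colax_structure K K' F0 F1 F2 C2 C0"
  shows "\<alpha> \<in> cell K \<Longrightarrow> \<beta> \<in> cell K \<Longrightarrow> trg K (dom2 K \<alpha>) = src K (dom2 K \<beta>) \<Longrightarrow>
        vcomp K' (hcomp K' (F2 \<beta>) (F2 \<alpha>)) (C2 (dom2 K \<beta>) (dom2 K \<alpha>))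
          = vcomp K' (C2 (cod2 K \<beta>) (cod2 K \<alpha>)) (F2 (hcomp K \<beta> \<alpha>))"
   "f \<in> hom K \<Longrightarrow> g \<in> hom K \<Longrightarrow> h \<in> hom K \<Longrightarrow> trg K f = src K g \<Longrightarrow> trg K g = src K h \<Longrightarrow>
        vcomp K' (hcomp K' (C2 h g) (id2 K' (F1 f))) (C2 (comp K h g) f)
          = vcomp K' (hcomp K' (id2 K' (F1 h)) (C2 g f)) (C2 h (comp K g f))"
   "f \<in> hom K \<Longrightarrow> vcomp K' (hcomp K' (C0 (trg K f)) (id2 K' (F1 f))) (C2 (idc K (trg K f)) f)
          = id2 K' (F1 f)"
   "f \<in> hom K \<Longrightarrow> vcomp K' (hcomp K' (id2 K' (F1 f)) (C0 (src K f))) (C2 f (idc K (src K f)))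
          = id2 K' (F1 f)"
  using assms unfolding colax_structure_def by auto

lemma bilax_more: assumes "bilax_functor K c K' F0 F1 F2 L2 L0 C2 C0 \<nu>" and A: "A \<in> ob K"
  shows
   "\<alpha> \<in> cell K \<Longrightarrow> \<beta> \<in> cell K \<Longrightarrow> endo K A (dom2 K \<alpha>) \<Longrightarrow> endo K A (dom2 K \<beta>) \<Longrightarrow>
        vcomp K' (\<nu> (cod2 K \<beta>) (cod2 K \<alpha>)) (hcomp K' (F2 \<beta>) (F2 \<alpha>))
          = vcomp K' (hcomp K' (F2 \<alpha>) (F2 \<beta>)) (\<nu> (dom2 K \<beta>) (dom2 K \<alpha>))"
   "endo K A f \<Longrightarrow> endo K A g \<Longrightarrow> endo K A h \<Longrightarrow>
        vcomp K' (\<nu> (comp K h g) f) (hcomp K' (L2 h g) (id2 K' (F1 f)))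
          = vcomp K' (hcomp K' (id2 K' (F1 f)) (L2 h g))
              (vcomp K' (hcomp K' (\<nu> h f) (id2 K' (F1 g))) (hcomp K' (id2 K' (F1 h)) (\<nu> g f)))"
   "endo K A f \<Longrightarrow>
        vcomp K' (\<nu> (idc K A) f) (hcomp K' (L0 A) (id2 K' (F1 f)))
          = hcomp K' (id2 K' (F1 f)) (L0 A)"
   "endo K A f \<Longrightarrow> endo K A g \<Longrightarrow> endo K A h \<Longrightarrow>
        vcomp K' (\<nu> h (comp K g f)) (hcomp K' (id2 K' (F1 h)) (L2 g f))
          = vcomp K' (hcomp K' (L2 g f) (id2 K' (F1 h)))
              (vcomp K' (hcomp K' (id2 K' (F1 g)) (\<nu> h f)) (hcomp K' (\<nu> h g) (id2 K' (F1 f))))"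
   "endo K A f \<Longrightarrow>
        vcomp K' (\<nu> f (idc K A)) (hcomp K' (id2 K' (F1 f)) (L0 A))
          = hcomp K' (L0 A) (id2 K' (F1 f))"
   "endo K A f \<Longrightarrow> endo K A g \<Longrightarrow> endo K A h \<Longrightarrow>
        vcomp K' (hcomp K' (C2 h g) (id2 K' (F1 f))) (\<nu> f (comp K h g))
          = vcomp K' (hcomp K' (id2 K' (F1 h)) (\<nu> f g))
              (vcomp K' (hcomp K' (\<nu> f h) (id2 K' (F1 g))) (hcomp K' (id2 K' (F1 f)) (C2 h g)))"
   "endo K A f \<Longrightarrow>
        vcomp K' (hcomp K' (C0 A) (id2 K' (F1 f))) (\<nu> f (idc K A))
          = hcomp K' (id2 K' (F1 f)) (C0 A)"
   "endo K A f \<Longrightarrow> endo K A g \<Longrightarrow> endo K A h \<Longrightarrow>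
        vcomp K' (hcomp K' (id2 K' (F1 h)) (C2 g f)) (\<nu> (comp K g f) h)
          = vcomp K' (hcomp K' (\<nu> g h) (id2 K' (F1 f)))
              (vcomp K' (hcomp K' (id2 K' (F1 g)) (\<nu> f h)) (hcomp K' (C2 g f) (id2 K' (F1 h))))"
   "endo K A f \<Longrightarrow>
        vcomp K' (hcomp K' (id2 K' (F1 f)) (C0 A)) (\<nu> (idc K A) f)
          = hcomp K' (C0 A) (id2 K' (F1 f))"
   "k \<in> hom K \<Longrightarrow> g \<in> hom K \<Longrightarrow> endo K (trg K k) f \<Longrightarrow> endo K (trg K k) h \<Longrightarrow> src K g = trg K k \<Longrightarrow>
        vcomp K' (hcomp K' (L2 g h) (L2 f k))
          (vcomp K' (hcomp K' (id2 K' (F1 g)) (hcomp K' (\<nu> f h) (id2 K' (F1 k))))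
             (hcomp K' (C2 g f) (C2 h k)))
        = vcomp K' (C2 (comp K g h) (comp K f k))
            (vcomp K' (F2 (hcomp K (id2 K g) (hcomp K (c f h) (id2 K k))))
               (L2 (comp K g f) (comp K h k)))"
   "hcomp K' (L0 A) (L0 A) = vcomp K' (C2 (idc K A) (idc K A)) (L0 A)"
   "hcomp K' (C0 A) (C0 A) = vcomp K' (C0 A) (L2 (idc K A) (idc K A))"
   "vcomp K' (C0 A) (L0 A) = id2 K' (idc K' (F0 A))"
  using assms unfolding bilax_functor_def
  apply -
  apply (elim conjE, (blast | meson A))+
  done

theorem proposition4p9:
  fixes K :: "('o, 'a, 'c) twocat" and K' :: "('p, 'b, 'd) twocat"
    and c :: "'a \<Rightarrow> 'a \<Rightarrow> 'c"
    and F0 :: "'o \<Rightarrow> 'p" and F1 :: "'a \<Rightarrow> 'b" and F2 :: "'c \<Rightarrow> 'd"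
    and L2 :: "'a \<Rightarrow> 'a \<Rightarrow> 'd" and L0 :: "'o \<Rightarrow> 'd"
    and C2 :: "'a \<Rightarrow> 'a \<Rightarrow> 'd" and C0 :: "'o \<Rightarrow> 'd"
    and \<nu> :: "'a \<Rightarrow> 'a \<Rightarrow> 'd"
    and A :: 'o and b :: 'a and \<mu> \<eta> \<Delta> \<epsilon> :: 'c
  assumes "strict_2cat K" and "strict_2cat K'"
    and "yb_operator K c"
    and "bilax_functor K c K' F0 F1 F2 L2 L0 C2 C0 \<nu>"
    and "A \<in> ob K"
    and "c_bimonad K c A b \<mu> \<eta> \<Delta> \<epsilon>"
  shows "tau_bimonad K' (F0 A) (F1 b)
           (vcomp K' (F2 \<mu>) (L2 b b)) (vcomp K' (F2 \<eta>) (L0 A))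
           (vcomp K' (C2 b b) (F2 \<Delta>)) (vcomp K' (C0 A) (F2 \<epsilon>))
           (\<nu> b b)"
proof -
  note K = assms(1) and K' = assms(2) and hA = assms(5)
  have FD: "functor_data K K' F0 F1 F2" and LX: "lax_structure K K' F0 F1 F2 L2 L0"
    and CX: "colax_structure K K' F0 F1 F2 C2 C0"
    using assms(4) unfolding bilax_functor_def by auto
  have TB: "tau_bimonad K A b \<mu> \<eta> \<Delta> \<epsilon> (c b b)" using assms(6) unfolding c_bimonad_def .
  have MK: "monad2 K A b \<mu> \<eta>" and CK: "comonad2 K A b \<Delta> \<epsilon>"
    using TB unfolding tau_bimonad_def by auto
  have hb: "b \<in> hom K" "src K b = A" "trg K b = A" using MK unfolding monad2_def endo_def by auto
  have hmu: "\<mu> \<in> cell K" "dom2 K \<mu> = comp K b b" "cod2 K \<mu> = b"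
   and heta: "\<eta> \<in> cell K" "dom2 K \<eta> = idc K A" "cod2 K \<eta> = b"
   and mass: "vcomp K \<mu> (hcomp K \<mu> (id2 K b)) = vcomp K \<mu> (hcomp K (id2 K b) \<mu>)"
   and mlu: "vcomp K \<mu> (hcomp K \<eta> (id2 K b)) = id2 K b"
   and mru: "vcomp K \<mu> (hcomp K (id2 K b) \<eta>) = id2 K b"
    using MK unfolding monad2_def cell_in_def by auto
  have hDe: "\<Delta> \<in> cell K" "dom2 K \<Delta> = b" "cod2 K \<Delta> = comp K b b"
   and heps: "\<epsilon> \<in> cell K" "dom2 K \<epsilon> = b" "cod2 K \<epsilon> = idc K A"
   and cass: "vcomp K (hcomp K \<Delta> (id2 K b)) \<Delta> = vcomp K (hcomp K (id2 K b) \<Delta>) \<Delta>"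
   and clu: "vcomp K (hcomp K \<epsilon> (id2 K b)) \<Delta> = id2 K b"
   and cru: "vcomp K (hcomp K (id2 K b) \<epsilon>) \<Delta> = id2 K b"
    using CK unfolding comonad2_def cell_in_def by auto
  have hc: "c b b \<in> cell K" "dom2 K (c b b) = comp K b b" "cod2 K (c b b) = comp K b b"
    using TB unfolding tau_bimonad_def cell_in_def by auto
  have bi1: "vcomp K (hcomp K \<mu> \<mu>) (vcomp K (hcomp K (id2 K b) (hcomp K (c b b) (id2 K b))) (hcomp K \<Delta> \<Delta>))
      = vcomp K \<Delta> \<mu>"
   and bi2: "hcomp K \<epsilon> \<epsilon> = vcomp K \<epsilon> \<mu>"
   and bi3: "hcomp K \<eta> \<eta> = vcomp K \<Delta> \<eta>"
   and bi4: "vcomp K \<epsilon> \<eta> = id2 K (idc K A)"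
    using TB unfolding tau_bimonad_def by auto
  have endob: "endo K A b" using hb unfolding endo_def by auto
  have endoi: "endo K A (idc K A)" using s_idc[OF K hA] unfolding endo_def by auto
  have endobb: "endo K A (comp K b b)" using s_comp[OF K hb(1) hb(1)] hb unfolding endo_def by auto
  have nuty: "\<And>f g. endo K A f \<Longrightarrow> endo K A g \<Longrightarrow>
        cell_in K' (\<nu> g f) (comp K' (F1 g) (F1 f)) (comp K' (F1 f) (F1 g))"
  proof -
    have "\<forall>A\<in>ob K. \<forall>f g. endo K A f \<and> endo K A g \<longrightarrow>
        cell_in K' (\<nu> g f) (comp K' (F1 g) (F1 f)) (comp K' (F1 f) (F1 g))"
      using assms(4) unfolding bilax_functor_def by (elim conjE) assumption
    then show "\<And>f g. endo K A f \<Longrightarrow> endo K A g \<Longrightarrow>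
        cell_in K' (\<nu> g f) (comp K' (F1 g) (F1 f)) (comp K' (F1 f) (F1 g))" using hA by blast
  qed
  note T = s_hom_ob[OF K] s_idc[OF K] s_comp[OF K] s_cell[OF K] s_id2[OF K] s_vcomp[OF K] s_hcomp[OF K]
    s_cunit[OF K] s_cassoc[OF K]
    s_hom_ob[OF K'] s_idc[OF K'] s_comp[OF K'] s_cell[OF K'] s_id2[OF K'] s_vcomp[OF K'] s_hcomp[OF K']
    s_cunit[OF K'] s_cassoc[OF K']
    fd_facts[OF FD] lax_facts[OF LX] colax_facts[OF CX] hA hb hmu heta hDe heps hc
  have nuT: "\<And>f g. endo K A f \<Longrightarrow> endo K A g \<Longrightarrow> \<nu> g f \<in> cell K'"
     "\<And>f g. endo K A f \<Longrightarrow> endo K A g \<Longrightarrow> dom2 K' (\<nu> g f) = comp K' (F1 g) (F1 f)"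
     "\<And>f g. endo K A f \<Longrightarrow> endo K A g \<Longrightarrow> cod2 K' (\<nu> g f) = comp K' (F1 f) (F1 g)"
    using nuty unfolding cell_in_def by auto
  note T = T nuT endob endoi endobb
  note N = s_xch_l[OF K'] s_xch_r[OF K'] s_vassoc[OF K']
  have mon: "monad2 K' (F0 A) (F1 b) (vcomp K' (F2 \<mu>) (L2 b b)) (vcomp K' (F2 \<eta>) (L0 A))"
  proof -
    have e1: "vcomp K' (L2 b b) (hcomp K' (F2 \<mu>) (id2 K' (F1 b))) = 
       vcomp K' (F2 (hcomp K \<mu> (id2 K b))) (L2 (comp K b b) b)"
      using lax_more(1)[OF LX, of "id2 K b" \<mu>] by (simp add: T)
    have e2: "vcomp K' (L2 b b) (hcomp K' (id2 K' (F1 b)) (F2 \<mu>)) = 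
       vcomp K' (F2 (hcomp K (id2 K b) \<mu>)) (L2 b (comp K b b))"
      using lax_more(1)[OF LX, of \<mu> "id2 K b"] by (simp add: T)
    have e3: "vcomp K' (L2 (comp K b b) b) (hcomp K' (L2 b b) (id2 K' (F1 b)))
          = vcomp K' (L2 b (comp K b b)) (hcomp K' (id2 K' (F1 b)) (L2 b b))"
      using lax_more(2)[OF LX, of b b b] by (simp add: T)
    have e4: "vcomp K' (F2 \<mu>) (F2 (hcomp K \<mu> (id2 K b))) = vcomp K' (F2 \<mu>) (F2 (hcomp K (id2 K b) \<mu>))"
      using arg_cong[OF mass, of F2] by (simp add: T)
    have e5: "vcomp K' (L2 b b) (hcomp K' (F2 \<eta>) (id2 K' (F1 b))) = 
       vcomp K' (F2 (hcomp K \<eta> (id2 K b))) (L2 (idc K A) b)"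
      using lax_more(1)[OF LX, of "id2 K b" \<eta>] by (simp add: T)
    have e6: "vcomp K' (L2 b b) (hcomp K' (id2 K' (F1 b)) (F2 \<eta>)) = 
       vcomp K' (F2 (hcomp K (id2 K b) \<eta>)) (L2 b (idc K A))"
      using lax_more(1)[OF LX, of \<eta> "id2 K b"] by (simp add: T)
    have e7: "vcomp K' (L2 (idc K A) b) (hcomp K' (L0 A) (id2 K' (F1 b))) = id2 K' (F1 b)"
      using lax_more(3)[OF LX, of b] by (simp add: T)
    have e8: "vcomp K' (L2 b (idc K A)) (hcomp K' (id2 K' (F1 b)) (L0 A)) = id2 K' (F1 b)"
      using lax_more(4)[OF LX, of b] by (simp add: T)
    have e9: "vcomp K' (F2 \<mu>) (F2 (hcomp K \<eta> (id2 K b))) = id2 K' (F1 b)"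
      using arg_cong[OF mlu, of F2] by (simp add: T)
    have e10: "vcomp K' (F2 \<mu>) (F2 (hcomp K (id2 K b) \<eta>)) = id2 K' (F1 b)"
      using arg_cong[OF mru, of F2] by (simp add: T)
    show ?thesis unfolding monad2_def endo_def cell_in_def
    apply (intro conjI)
    apply (simp_all add: T)
      apply (simp add: T N s_vext[OF K' e1] s_vext[OF K' e2] e3 s_vext[OF K' e4])
     apply (simp add: T N s_vext[OF K' e5] e7 s_vid[OF K'] e9)
    apply (simp add: T N s_vext[OF K' e6] e8 s_vid[OF K'] e10)
    done
  qed
  have com: "comonad2 K' (F0 A) (F1 b) (vcomp K' (C2 b b) (F2 \<Delta>)) (vcomp K' (C0 A) (F2 \<epsilon>))"
  proof -
    have e1: "vcomp K' (hcomp K' (F2 \<Delta>) (id2 K' (F1 b))) (C2 b b) = 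
       vcomp K' (C2 (comp K b b) b) (F2 (hcomp K \<Delta> (id2 K b)))"
      using colax_more(1)[OF CX, of "id2 K b" \<Delta>] by (simp add: T)
    have e2: "vcomp K' (hcomp K' (id2 K' (F1 b)) (F2 \<Delta>)) (C2 b b) = 
       vcomp K' (C2 b (comp K b b)) (F2 (hcomp K (id2 K b) \<Delta>))"
      using colax_more(1)[OF CX, of \<Delta> "id2 K b"] by (simp add: T)
    have e3: "vcomp K' (hcomp K' (C2 b b) (id2 K' (F1 b))) (C2 (comp K b b) b)
          = vcomp K' (hcomp K' (id2 K' (F1 b)) (C2 b b)) (C2 b (comp K b b))"
      using colax_more(2)[OF CX, of b b b] by (simp add: T)
    have e4: "vcomp K' (F2 (hcomp K \<Delta> (id2 K b))) (F2 \<Delta>) = vcomp K' (F2 (hcomp K (id2 K b) \<Delta>)) (F2 \<Delta>)"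
      using arg_cong[OF cass, of F2] by (simp add: T)
    have e5: "vcomp K' (hcomp K' (F2 \<epsilon>) (id2 K' (F1 b))) (C2 b b) = 
       vcomp K' (C2 (idc K A) b) (F2 (hcomp K \<epsilon> (id2 K b)))"
      using colax_more(1)[OF CX, of "id2 K b" \<epsilon>] by (simp add: T)
    have e6: "vcomp K' (hcomp K' (id2 K' (F1 b)) (F2 \<epsilon>)) (C2 b b) = 
       vcomp K' (C2 b (idc K A)) (F2 (hcomp K (id2 K b) \<epsilon>))"
      using colax_more(1)[OF CX, of \<epsilon> "id2 K b"] by (simp add: T)
    have e7: "vcomp K' (hcomp K' (C0 A) (id2 K' (F1 b))) (C2 (idc K A) b) = id2 K' (F1 b)"
      using colax_more(3)[OF CX, of b] by (simp add: T)
    have e8: "vcomp K' (hcomp K' (id2 K' (F1 b)) (C0 A)) (C2 b (idc K A)) = id2 K' (F1 b)"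
      using colax_more(4)[OF CX, of b] by (simp add: T)
    have e9: "vcomp K' (F2 (hcomp K \<epsilon> (id2 K b))) (F2 \<Delta>) = id2 K' (F1 b)"
      using arg_cong[OF clu, of F2] by (simp add: T)
    have e10: "vcomp K' (F2 (hcomp K (id2 K b) \<epsilon>)) (F2 \<Delta>) = id2 K' (F1 b)"
      using arg_cong[OF cru, of F2] by (simp add: T)
    show ?thesis unfolding comonad2_def endo_def cell_in_def
    apply (intro conjI)
    apply (simp_all add: T)
      apply (simp add: T N s_vext[OF K' e1] s_vext[OF K' e2] s_vext[OF K' e3] e4)
     apply (simp add: T N s_vext[OF K' e5] s_vext_id[OF K' e7] e9)
    apply (simp add: T N s_vext[OF K' e6] s_vext_id[OF K' e8] e10)
    done
  qed
  note nu = bilax_more[OF assms(4) hA]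
  have dis: "vcomp K' (\<nu> b b) (hcomp K' (vcomp K' (F2 \<mu>) (L2 b b)) (id2 K' (F1 b)))
      = vcomp K' (hcomp K' (id2 K' (F1 b)) (vcomp K' (F2 \<mu>) (L2 b b))) (vcomp K' (hcomp K' (\<nu> b b) (id2 K' (F1 b))) (hcomp K' (id2 K' (F1 b)) (\<nu> b b)))"
  proof -
    have e1: "vcomp K' (\<nu> b b) (hcomp K' (F2 \<mu>) (id2 K' (F1 b))) = vcomp K' (hcomp K' (id2 K' (F1 b)) (F2 \<mu>)) (\<nu> (comp K b b) b)"
      using nu(1)[of "id2 K b" \<mu>] by (simp add: T)
    have e2: "vcomp K' (\<nu> (comp K b b) b) (hcomp K' (L2 b b) (id2 K' (F1 b)))
          = vcomp K' (hcomp K' (id2 K' (F1 b)) (L2 b b))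
              (vcomp K' (hcomp K' (\<nu> b b) (id2 K' (F1 b))) (hcomp K' (id2 K' (F1 b)) (\<nu> b b)))"
      using nu(2)[of b b b] by (simp add: T)
    show ?thesis by (simp add: T N s_vext[OF K' e1] e2)
  qed
  have d2: "vcomp K' (\<nu> b b) (hcomp K' (vcomp K' (F2 \<eta>) (L0 A)) (id2 K' (F1 b)))
      = hcomp K' (id2 K' (F1 b)) (vcomp K' (F2 \<eta>) (L0 A))"
  proof -
    have e1: "vcomp K' (\<nu> b b) (hcomp K' (F2 \<eta>) (id2 K' (F1 b))) = vcomp K' (hcomp K' (id2 K' (F1 b)) (F2 \<eta>)) (\<nu> (idc K A) b)"
      using nu(1)[of "id2 K b" \<eta>] by (simp add: T)
    have e2: "vcomp K' (\<nu> (idc K A) b) (hcomp K' (L0 A) (id2 K' (F1 b))) = hcomp K' (id2 K' (F1 b)) (L0 A)"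
      using nu(3)[of b] by (simp add: T)
    show ?thesis by (simp add: T N s_vext[OF K' e1] e2)
  qed
  have d3: "vcomp K' (\<nu> b b) (hcomp K' (id2 K' (F1 b)) (vcomp K' (F2 \<mu>) (L2 b b)))
      = vcomp K' (hcomp K' (vcomp K' (F2 \<mu>) (L2 b b)) (id2 K' (F1 b))) (vcomp K' (hcomp K' (id2 K' (F1 b)) (\<nu> b b)) (hcomp K' (\<nu> b b) (id2 K' (F1 b))))"
  proof -
    have e1: "vcomp K' (\<nu> b b) (hcomp K' (id2 K' (F1 b)) (F2 \<mu>)) = vcomp K' (hcomp K' (F2 \<mu>) (id2 K' (F1 b))) (\<nu> b (comp K b b))"
      using nu(1)[of \<mu> "id2 K b"] by (simp add: T)
    have e2: "vcomp K' (\<nu> b (comp K b b)) (hcomp K' (id2 K' (F1 b)) (L2 b b))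
          = vcomp K' (hcomp K' (L2 b b) (id2 K' (F1 b)))
              (vcomp K' (hcomp K' (id2 K' (F1 b)) (\<nu> b b)) (hcomp K' (\<nu> b b) (id2 K' (F1 b))))"
      using nu(4)[of b b b] by (simp add: T)
    show ?thesis by (simp add: T N s_vext[OF K' e1] e2)
  qed
  have d4: "vcomp K' (\<nu> b b) (hcomp K' (id2 K' (F1 b)) (vcomp K' (F2 \<eta>) (L0 A)))
      = hcomp K' (vcomp K' (F2 \<eta>) (L0 A)) (id2 K' (F1 b))"
  proof -
    have e1: "vcomp K' (\<nu> b b) (hcomp K' (id2 K' (F1 b)) (F2 \<eta>)) = vcomp K' (hcomp K' (F2 \<eta>) (id2 K' (F1 b))) (\<nu> b (idc K A))"
      using nu(1)[of \<eta> "id2 K b"] by (simp add: T)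
    have e2: "vcomp K' (\<nu> b (idc K A)) (hcomp K' (id2 K' (F1 b)) (L0 A)) = hcomp K' (L0 A) (id2 K' (F1 b))"
      using nu(5)[of b] by (simp add: T)
    show ?thesis by (simp add: T N s_vext[OF K' e1] e2)
  qed
  have d5: "vcomp K' (hcomp K' (vcomp K' (C2 b b) (F2 \<Delta>)) (id2 K' (F1 b))) (\<nu> b b)
      = vcomp K' (hcomp K' (id2 K' (F1 b)) (\<nu> b b)) (vcomp K' (hcomp K' (\<nu> b b) (id2 K' (F1 b))) (hcomp K' (id2 K' (F1 b)) (vcomp K' (C2 b b) (F2 \<Delta>))))"
  proof -
    have e1: "vcomp K' (hcomp K' (F2 \<Delta>) (id2 K' (F1 b))) (\<nu> b b) = vcomp K' (\<nu> b (comp K b b)) (hcomp K' (id2 K' (F1 b)) (F2 \<Delta>))"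
      using nu(1)[of \<Delta> "id2 K b"] by (simp add: T)
    have e2: "vcomp K' (hcomp K' (C2 b b) (id2 K' (F1 b))) (\<nu> b (comp K b b))
          = vcomp K' (hcomp K' (id2 K' (F1 b)) (\<nu> b b))
              (vcomp K' (hcomp K' (\<nu> b b) (id2 K' (F1 b))) (hcomp K' (id2 K' (F1 b)) (C2 b b)))"
      using nu(6)[of b b b] by (simp add: T)
    show ?thesis by (simp add: T N e1 s_vext[OF K' e2])
  qed
  have d6: "vcomp K' (hcomp K' (vcomp K' (C0 A) (F2 \<epsilon>)) (id2 K' (F1 b))) (\<nu> b b)
      = hcomp K' (id2 K' (F1 b)) (vcomp K' (C0 A) (F2 \<epsilon>))"
  proof -
    have e1: "vcomp K' (hcomp K' (F2 \<epsilon>) (id2 K' (F1 b))) (\<nu> b b) = vcomp K' (\<nu> b (idc K A)) (hcomp K' (id2 K' (F1 b)) (F2 \<epsilon>))"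
      using nu(1)[of \<epsilon> "id2 K b"] by (simp add: T)
    have e2: "vcomp K' (hcomp K' (C0 A) (id2 K' (F1 b))) (\<nu> b (idc K A)) = hcomp K' (id2 K' (F1 b)) (C0 A)"
      using nu(7)[of b] by (simp add: T)
    have e2': "vcomp K' (hcomp K' (C0 A) (id2 K' (F1 b))) (vcomp K' (\<nu> b (idc K A)) R) = vcomp K' (hcomp K' (id2 K' (F1 b)) (C0 A)) R"
      if "R \<in> cell K'" "cod2 K' R = comp K' (F1 b) (F1 (idc K A))" for R
      using that e2 s_vassoc[OF K', of R "\<nu> b (idc K A)" "hcomp K' (C0 A) (id2 K' (F1 b))"] by (simp add: T)
    show ?thesis by (simp add: T N e1 e2')
  qed
  have d7: "vcomp K' (hcomp K' (id2 K' (F1 b)) (vcomp K' (C2 b b) (F2 \<Delta>))) (\<nu> b b)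
      = vcomp K' (hcomp K' (\<nu> b b) (id2 K' (F1 b))) (vcomp K' (hcomp K' (id2 K' (F1 b)) (\<nu> b b)) (hcomp K' (vcomp K' (C2 b b) (F2 \<Delta>)) (id2 K' (F1 b))))"
  proof -
    have e1: "vcomp K' (hcomp K' (id2 K' (F1 b)) (F2 \<Delta>)) (\<nu> b b) = vcomp K' (\<nu> (comp K b b) b) (hcomp K' (F2 \<Delta>) (id2 K' (F1 b)))"
      using nu(1)[of "id2 K b" \<Delta>] by (simp add: T)
    have e2: "vcomp K' (hcomp K' (id2 K' (F1 b)) (C2 b b)) (\<nu> (comp K b b) b)
          = vcomp K' (hcomp K' (\<nu> b b) (id2 K' (F1 b)))
              (vcomp K' (hcomp K' (id2 K' (F1 b)) (\<nu> b b)) (hcomp K' (C2 b b) (id2 K' (F1 b))))"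
      using nu(8)[of b b b] by (simp add: T)
    show ?thesis by (simp add: T N e1 s_vext[OF K' e2])
  qed
  have d8: "vcomp K' (hcomp K' (id2 K' (F1 b)) (vcomp K' (C0 A) (F2 \<epsilon>))) (\<nu> b b)
      = hcomp K' (vcomp K' (C0 A) (F2 \<epsilon>)) (id2 K' (F1 b))"
  proof -
    have e1: "vcomp K' (hcomp K' (id2 K' (F1 b)) (F2 \<epsilon>)) (\<nu> b b) = vcomp K' (\<nu> (idc K A) b) (hcomp K' (F2 \<epsilon>) (id2 K' (F1 b)))"
      using nu(1)[of "id2 K b" \<epsilon>] by (simp add: T)
    have e2: "vcomp K' (hcomp K' (id2 K' (F1 b)) (C0 A)) (\<nu> (idc K A) b) = hcomp K' (C0 A) (id2 K' (F1 b))"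
      using nu(9)[of b] by (simp add: T)
    have e2': "vcomp K' (hcomp K' (id2 K' (F1 b)) (C0 A)) (vcomp K' (\<nu> (idc K A) b) R) = vcomp K' (hcomp K' (C0 A) (id2 K' (F1 b))) R"
      if "R \<in> cell K'" "cod2 K' R = comp K' (F1 (idc K A)) (F1 b)" for R
      using that e2 s_vassoc[OF K', of R "\<nu> (idc K A) b" "hcomp K' (id2 K' (F1 b)) (C0 A)"] by (simp add: T)
    show ?thesis by (simp add: T N e1 e2')
  qed
  have b1: "vcomp K' (hcomp K' (vcomp K' (F2 \<mu>) (L2 b b)) (vcomp K' (F2 \<mu>) (L2 b b)))
       (vcomp K' (hcomp K' (id2 K' (F1 b)) (hcomp K' (\<nu> b b) (id2 K' (F1 b))))
         (hcomp K' (vcomp K' (C2 b b) (F2 \<Delta>)) (vcomp K' (C2 b b) (F2 \<Delta>))))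
      = vcomp K' (vcomp K' (C2 b b) (F2 \<Delta>)) (vcomp K' (F2 \<mu>) (L2 b b))"
  proof -
    have g1: "vcomp K' (hcomp K' (L2 b b) (L2 b b))
          (vcomp K' (hcomp K' (id2 K' (F1 b)) (hcomp K' (\<nu> b b) (id2 K' (F1 b))))
             (hcomp K' (C2 b b) (C2 b b)))
        = vcomp K' (C2 (comp K b b) (comp K b b))
            (vcomp K' (F2 (hcomp K (id2 K b) (hcomp K (c b b) (id2 K b))))
               (L2 (comp K b b) (comp K b b)))"
      using nu(10)[of b b b b] by (simp add: T)
    have g2: "vcomp K' (L2 (comp K b b) (comp K b b)) (hcomp K' (F2 \<Delta>) (F2 \<Delta>)) =
        vcomp K' (F2 (hcomp K \<Delta> \<Delta>)) (L2 b b)"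
      using lax_more(1)[OF LX, of \<Delta> \<Delta>] by (simp add: T)
    have g3: "vcomp K' (hcomp K' (F2 \<mu>) (F2 \<mu>)) (C2 (comp K b b) (comp K b b)) =
        vcomp K' (C2 b b) (F2 (hcomp K \<mu> \<mu>))"
      using colax_more(1)[OF CX, of \<mu> \<mu>] by (simp add: T)
    have g4: "vcomp K' (F2 (hcomp K \<mu> \<mu>)) (vcomp K' (F2 (hcomp K (id2 K b) (hcomp K (c b b) (id2 K b))))
        (F2 (hcomp K \<Delta> \<Delta>))) = vcomp K' (F2 \<Delta>) (F2 \<mu>)"
      using arg_cong[OF bi1, of F2] by (simp add: T)
    show ?thesis by (simp add: T N s_xch[OF K'] s_vext3[OF K' g1] g2 s_vext[OF K' g3] s_vext32[OF K' g4])
  qed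
  have b2: "hcomp K' (vcomp K' (C0 A) (F2 \<epsilon>)) (vcomp K' (C0 A) (F2 \<epsilon>))
      = vcomp K' (vcomp K' (C0 A) (F2 \<epsilon>)) (vcomp K' (F2 \<mu>) (L2 b b))"
  proof -
    have g1: "vcomp K' (L2 (idc K A) (idc K A)) (hcomp K' (F2 \<epsilon>) (F2 \<epsilon>)) =
        vcomp K' (F2 (hcomp K \<epsilon> \<epsilon>)) (L2 b b)"
      using lax_more(1)[OF LX, of \<epsilon> \<epsilon>] by (simp add: T)
    have g2: "F2 (hcomp K \<epsilon> \<epsilon>) = vcomp K' (F2 \<epsilon>) (F2 \<mu>)"
      using arg_cong[OF bi2, of F2] by (simp add: T)
    show ?thesis by (simp add: T N s_xch[OF K'] nu(12) g1 g2)
  qed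
  have b3: "hcomp K' (vcomp K' (F2 \<eta>) (L0 A)) (vcomp K' (F2 \<eta>) (L0 A))
      = vcomp K' (vcomp K' (C2 b b) (F2 \<Delta>)) (vcomp K' (F2 \<eta>) (L0 A))"
  proof -
    have g1: "vcomp K' (hcomp K' (F2 \<eta>) (F2 \<eta>)) (C2 (idc K A) (idc K A)) =
        vcomp K' (C2 b b) (F2 (hcomp K \<eta> \<eta>))"
      using colax_more(1)[OF CX, of \<eta> \<eta>] by (simp add: T)
    have g2: "F2 (hcomp K \<eta> \<eta>) = vcomp K' (F2 \<Delta>) (F2 \<eta>)"
      using arg_cong[OF bi3, of F2] by (simp add: T)
    show ?thesis by (simp add: T N s_xch[OF K'] nu(11) s_vext[OF K' g1] g2)
  qed
  have b4: "vcomp K' (vcomp K' (C0 A) (F2 \<epsilon>)) (vcomp K' (F2 \<eta>) (L0 A)) = id2 K' (idc K' (F0 A))"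
  proof -
    have g1: "vcomp K' (F2 \<epsilon>) (F2 \<eta>) = id2 K' (F1 (idc K A))"
      using arg_cong[OF bi4, of F2] by (simp add: T)
    show ?thesis by (simp add: T N s_vext_id[OF K' g1] nu(13))
  qed
  have tty: "cell_in K' (\<nu> b b) (comp K' (F1 b) (F1 b)) (comp K' (F1 b) (F1 b))"
    using nuty[OF endob endob] .
  show ?thesis unfolding tau_bimonad_def
    by (intro conjI mon com tty dis d2 d3 d4 d5 d6 d7 d8 b1 b2 b3 b4)
qed
end
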